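(* Let $\mathsf{Ax}\subseteq\{\mathsf{C}_\Diamond,\mathsf{I}_{\Diamond\Box}\}$. Then $\mathsf{CK}\oplus\mathsf{N}_{\Diamond\Box}\oplus\mathsf{Ax}$ is sound and strongly complete with respect to the class of $\mathsf{CK}$-frames satisfying ($\mathsf{N}_{\Diamond\Box}$-corr) and ($\mathsf{A}$-suff) for each $\mathsf{A}\in\mathsf{Ax}$. Moreover, if $\mathsf{I}_{\Diamond\Box}\in\mathsf{Ax}$, it is also sound and strongly complete with respect to the class of $\mathsf{CK}$-frames satisfying ($\mathsf{N}_{\Diamond\Box}$-suff) and ($\mathsf{A}$-suff) for each $\mathsf{A}\in\mathsf{Ax}$. (Sound and strongly complete w.r.t. $\mathcal{F}$ means $\Gamma\vdash\varphi$ iff $\Gamma\Vdash_{\mathcal{F}}\varphi$ for all $\Gamma\subseteq\mathbf{L}$, $\varphi\in\mathbf{L}$.)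
   Context: Formulas: $\mathbf{L}$ is generated from a countably infinite set of propositional variables by $\varphi ::= p \mid \bot \mid \varphi\wedge\varphi \mid \varphi\vee\varphi \mid \varphi\to\varphi \mid \Box\varphi \mid \Diamond\varphi$. Axioms: $\mathsf{K}_\Box$: $\Box(\varphi\to\psi)\to(\Box\varphi\to\Box\psi)$; $\mathsf{K}_\Diamond$: $\Box(\varphi\to\psi)\to(\Diamond\varphi\to\Diamond\psi)$; $\mathsf{N}_{\Diamond\Box}$: $\Diamond\bot\to\Box\bot$; $\mathsf{C}_\Diamond$: $\Diamond(\varphi\vee\psi)\to\Diamond\varphi\vee\Diamond\psi$; $\mathsf{I}_{\Diamond\Box}$: $(\Diamond\varphi\to\Box\psi)\to\Box(\varphi\to\psi)$. For a set $\mathsf{Ax}$ of axioms, $\mathsf{CK}\oplus\mathsf{Ax}$ is the relation $\Gamma\vdash_{\mathsf{Ax}}\varphi$ inductively generated by: (Ax) $\Gamma\vdash\varphi$ whenever $\varphi$ is a substitution instance of an axiom of a standard Hilbert axiomatisation of intuitionistic propositional logic, of $\mathsf{K}_\Box$, of $\mathsf{K}_\Diamond$, or of an element of $\mathsf{Ax}$; (El) $\Gamma\vdash\varphi$ if $\varphi\in\Gamma$; (MP) from $\Gamma\vdash\varphi$ and $\Gamma\vdash\varphi\to\psi$ infer $\Gamma\vdash\psi$; (Nec) from $\emptyset\vdash\varphi$ infer $\Gamma\vdash\Box\varphi$. A $\mathsf{CK}$-frame is a tuple $(X,e,\le,R)$ where $(X,\le)$ is a preorder, $e\in X$ is a maximal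 element of $(X,\le)$, and $R$ is a binary relation on $X$ with $eRx$ iff $x=e$. A valuation assigns to each variable $p$ an upset $V(p)$ with $e\in V(p)$. Forcing: $x\Vdash p$ iff $x\in V(p)$; $x\Vdash\bot$ iff $x=e$; $\wedge,\vee$ pointwise; $x\Vdash\varphi\to\psi$ iff for all $y\ge x$, $y\Vdash\varphi$ implies $y\Vdash\psi$; $x\Vdash\Box\varphi$ iff for all $y,z$ with $x\le y$ and $yRz$, $z\Vdash\varphi$; $x\Vdash\Diamond\varphi$ iff for all $y\ge x$ there is $z$ with $yRz$ and $z\Vdash\varphi$. For a class $\mathcal{F}$ of frames, $\Gamma\Vdash_{\mathcal{F}}\varphi$ means: for every frame in $\mathcal{F}$, every valuation and every world $x$, if $x$ forces all of $\Gamma$ then $x\Vdash\varphi$. Frame conditions: ($\mathsf{N}_{\Diamond\Box}$-suff) for all $x,y$, if $xRe$ and $xRy$ then $y=e$. ($\mathsf{N}_{\Diamond\Box}$-corr) for all $x$, if $yRe$ for every $y\ge x$, then for all $y,z$ with $x\le y$ and $yRz$, $z=e$. ($\mathsf{C}_\Diamond$-suff) for all $x$ there is $x'\ge x$ such that for all $y,z$, if $x\le y$ and $x'Rz$ then there is $w$ with $yRw$ and $z\le w$. ($\mathsf{I}_{\Diamond\Box}$-suff) for all $x,y,z$ with $xRy$ and $y\le z$ there is $u$ with $x\le u$ and $uRz$ such that for every $s\ge u$ there is $t$ with $sRt$ and $z\le t$. *)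

theory Defs
  imports Main
begin

datatype fm =
    Var nat
  | Bot
  | And fm fm
  | Or fm fm
  | Imp fm fm
  | Box fm
  | Dia fm

datatype ax = NDB | CD | IDB

inductive ipc_axiom :: "fm \<Rightarrow> bool" where
  A1: "ipc_axiom (Imp p (Imp q p))"
| A2: "ipc_axiom (Imp (Imp p (Imp q r)) (Imp (Imp p q) (Imp p r)))"
| A3: "ipc_axiom (Imp (And p q) p)"
| A4: "ipc_axiom (Imp (And p q) q)"
| A5: "ipc_axiom (Imp p (Imp q (And p q)))"
| A6: "ipc_axiom (Imp p (Or p q))"
| A7: "ipc_axiom (Imp q (Or p q))"
| A8: "ipc_axiom (Imp (Imp p r) (Imp (Imp q r) (Imp (Or p q) r)))"
| A9: "ipc_axiom (Imp Bot p)"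

fun ax_instance :: "ax \<Rightarrow> fm \<Rightarrow> bool" where
  "ax_instance NDB \<phi> = (\<phi> = Imp (Dia Bot) (Box Bot))"
| "ax_instance CD \<phi> = (\<exists>p q. \<phi> = Imp (Dia (Or p q)) (Or (Dia p) (Dia q)))"
| "ax_instance IDB \<phi> = (\<exists>p q. \<phi> = Imp (Imp (Dia p) (Box q)) (Box (Imp p q)))"

inductive deriv :: "ax set \<Rightarrow> fm set \<Rightarrow> fm \<Rightarrow> bool" where
  ipc: "ipc_axiom \<phi> \<Longrightarrow> deriv Ax \<Gamma> \<phi>"
| KBox: "deriv Ax \<Gamma> (Imp (Box (Imp p q)) (Imp (Box p) (Box q)))"
| KDia: "deriv Ax \<Gamma> (Imp (Box (Imp p q)) (Imp (Dia p) (Dia q)))"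
| extra: "A \<in> Ax \<Longrightarrow> ax_instance A \<phi> \<Longrightarrow> deriv Ax \<Gamma> \<phi>"
| El: "\<phi> \<in> \<Gamma> \<Longrightarrow> deriv Ax \<Gamma> \<phi>"
| MP: "deriv Ax \<Gamma> \<phi> \<Longrightarrow> deriv Ax \<Gamma> (Imp \<phi> \<psi>) \<Longrightarrow> deriv Ax \<Gamma> \<psi>"
| Nec: "deriv Ax {} \<phi> \<Longrightarrow> deriv Ax \<Gamma> (Box \<phi>)"

definition ck_frame :: "'w set \<Rightarrow> 'w \<Rightarrow> ('w \<Rightarrow> 'w \<Rightarrow> bool) \<Rightarrow> ('w \<Rightarrow> 'w \<Rightarrow> bool) \<Rightarrow> bool" where
  "ck_frame X e le R \<longleftrightarrow>
     (\<forall>x y. le x y \<longrightarrow> x \<in> X \<and> y \<in> X) \<and>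
     (\<forall>x y. R x y \<longrightarrow> x \<in> X \<and> y \<in> X) \<and>
     (\<forall>x\<in>X. le x x) \<and>
     (\<forall>x y z. le x y \<longrightarrow> le y z \<longrightarrow> le x z) \<and>
     e \<in> X \<and>
     (\<forall>x\<in>X. le e x \<longrightarrow> x = e) \<and>
     (\<forall>x\<in>X. R e x \<longleftrightarrow> x = e)"

definition valuation :: "'w set \<Rightarrow> 'w \<Rightarrow> ('w \<Rightarrow> 'w \<Rightarrow> bool) \<Rightarrow> (nat \<Rightarrow> 'w set) \<Rightarrow> bool" where
  "valuation X e le V \<longleftrightarrow>
     (\<forall>p. V p \<subseteq> X \<and> e \<in> V p \<and> (\<forall>x y. x \<in> V p \<longrightarrow> le x y \<longrightarrow> y \<in> V p))"

fun forces :: "'w set \<Rightarrow> 'w \<Rightarrow> ('w \<Rightarrow> 'w \<Rightarrow> bool) \<Rightarrow> ('w \<Rightarrow> 'w \<Rightarrow> bool)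
               \<Rightarrow> (nat \<Rightarrow> 'w set) \<Rightarrow> 'w \<Rightarrow> fm \<Rightarrow> bool" where
  "forces X e le R V x (Var p) = (x \<in> V p)"
| "forces X e le R V x Bot = (x = e)"
| "forces X e le R V x (And \<phi> \<psi>) = (forces X e le R V x \<phi> \<and> forces X e le R V x \<psi>)"
| "forces X e le R V x (Or \<phi> \<psi>) = (forces X e le R V x \<phi> \<or> forces X e le R V x \<psi>)"
| "forces X e le R V x (Imp \<phi> \<psi>) =
     (\<forall>y\<in>X. le x y \<longrightarrow> forces X e le R V y \<phi> \<longrightarrow> forces X e le R V y \<psi>)"
| "forces X e le R V x (Box \<phi>) =
     (\<forall>y\<in>X. \<forall>z\<in>X. le x y \<longrightarrow> R y z \<longrightarrow> forces X e le R V z \<phi>)"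
| "forces X e le R V x (Dia \<phi>) =
     (\<forall>y\<in>X. le x y \<longrightarrow> (\<exists>z\<in>X. R y z \<and> forces X e le R V z \<phi>))"

definition N_suff :: "'w set \<Rightarrow> 'w \<Rightarrow> ('w \<Rightarrow> 'w \<Rightarrow> bool) \<Rightarrow> ('w \<Rightarrow> 'w \<Rightarrow> bool) \<Rightarrow> bool" where
  "N_suff X e le R \<longleftrightarrow> (\<forall>x\<in>X. \<forall>y\<in>X. R x e \<and> R x y \<longrightarrow> y = e)"

definition N_corr :: "'w set \<Rightarrow> 'w \<Rightarrow> ('w \<Rightarrow> 'w \<Rightarrow> bool) \<Rightarrow> ('w \<Rightarrow> 'w \<Rightarrow> bool) \<Rightarrow> bool" where
  "N_corr X e le R \<longleftrightarrow>
     (\<forall>x\<in>X. (\<forall>y\<in>X. le x y \<longrightarrow> R y e) \<longrightarrow>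
              (\<forall>y\<in>X. \<forall>z\<in>X. le x y \<and> R y z \<longrightarrow> z = e))"

definition C_suff :: "'w set \<Rightarrow> 'w \<Rightarrow> ('w \<Rightarrow> 'w \<Rightarrow> bool) \<Rightarrow> ('w \<Rightarrow> 'w \<Rightarrow> bool) \<Rightarrow> bool" where
  "C_suff X e le R \<longleftrightarrow>
     (\<forall>x\<in>X. \<exists>x'\<in>X. le x x' \<and>
        (\<forall>y\<in>X. \<forall>z\<in>X. le x y \<and> R x' z \<longrightarrow> (\<exists>w\<in>X. R y w \<and> le z w)))"

definition I_suff :: "'w set \<Rightarrow> 'w \<Rightarrow> ('w \<Rightarrow> 'w \<Rightarrow> bool) \<Rightarrow> ('w \<Rightarrow> 'w \<Rightarrow> bool) \<Rightarrow> bool" where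
  "I_suff X e le R \<longleftrightarrow>
     (\<forall>x\<in>X. \<forall>y\<in>X. \<forall>z\<in>X. R x y \<and> le y z \<longrightarrow>
        (\<exists>u\<in>X. le x u \<and> R u z \<and> (\<forall>s\<in>X. le u s \<longrightarrow> (\<exists>t\<in>X. R s t \<and> le z t))))"

datatype ncond = Ncorr | Nsuff

definition in_class :: "ncond \<Rightarrow> ax set \<Rightarrow> 'w set \<Rightarrow> 'w \<Rightarrow> ('w \<Rightarrow> 'w \<Rightarrow> bool) \<Rightarrow> ('w \<Rightarrow> 'w \<Rightarrow> bool) \<Rightarrow> bool" where
  "in_class nc Ax X e le R \<longleftrightarrow>
     ck_frame X e le R \<and>
     (case nc of Ncorr \<Rightarrow> N_corr X e le R | Nsuff \<Rightarrow> N_suff X e le R) \<and>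
     (CD \<in> Ax \<longrightarrow> C_suff X e le R) \<and>
     (IDB \<in> Ax \<longrightarrow> I_suff X e le R)"

definition conseq :: "'w itself \<Rightarrow> ncond \<Rightarrow> ax set \<Rightarrow> fm set \<Rightarrow> fm \<Rightarrow> bool" where
  "conseq _ nc Ax \<Gamma> \<phi> \<longleftrightarrow>
     (\<forall>(X::'w set) e le R V. in_class nc Ax X e le R \<longrightarrow> valuation X e le V \<longrightarrow>
        (\<forall>x\<in>X. (\<forall>\<psi>\<in>\<Gamma>. forces X e le R V x \<psi>) \<longrightarrow> forces X e le R V x \<phi>))"

text \<open>Soundness (for frames over an arbitrary type 'w) and strong completeness
  (countermodels can be found among frames whose worlds are sets of formulas).\<close>
definition sound_strongly_complete :: "'w itself \<Rightarrow> ax set \<Rightarrow> ncond \<Rightarrow> ax set \<Rightarrow> bool" where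
  "sound_strongly_complete T L nc Ax \<longleftrightarrow>
     (\<forall>\<Gamma> \<phi>. deriv L \<Gamma> \<phi> \<longrightarrow> conseq T nc Ax \<Gamma> \<phi>) \<and>
     (\<forall>\<Gamma> \<phi>. conseq TYPE(fm set) nc Ax \<Gamma> \<phi> \<longrightarrow> deriv L \<Gamma> \<phi>)"

end

theory Submission
  imports Defs
begin

lemma deriv_mono: "deriv L G \<phi> \<Longrightarrow> G \<subseteq> H \<Longrightarrow> deriv L H \<phi>"
proof (induction arbitrary: H rule: deriv.induct)
  case (ipc \<phi> Ax \<Gamma>) show ?case using ipc(1) by (rule deriv.ipc)
next case (KBox Ax \<Gamma> p q) show ?case by (rule deriv.KBox)
next case (KDia Ax \<Gamma> p q) show ?case by (rule deriv.KDia)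
next case (extra A Ax \<phi> \<Gamma>) show ?case using extra(1,2) by (rule deriv.extra)
next case (El \<phi> \<Gamma> Ax) show ?case using El by (metis deriv.El subsetD)
next case (MP Ax \<Gamma> \<phi> \<psi>) show ?case using MP by (metis deriv.MP)
next case (Nec Ax \<phi> \<Gamma>) show ?case using Nec(1) by (rule deriv.Nec)
qed

lemma ax1: "deriv L G (Imp p (Imp q p))" by (rule deriv.ipc) (rule ipc_axiom.intros)
lemma ax2: "deriv L G (Imp (Imp p (Imp q r)) (Imp (Imp p q) (Imp p r)))" by (rule deriv.ipc) (rule ipc_axiom.intros)
lemma ax3: "deriv L G (Imp (And p q) p)" by (rule deriv.ipc) (rule ipc_axiom.intros)
lemma ax4: "deriv L G (Imp (And p q) q)" by (rule deriv.ipc) (rule ipc_axiom.intros)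
lemma ax5: "deriv L G (Imp p (Imp q (And p q)))" by (rule deriv.ipc) (rule ipc_axiom.intros)
lemma ax6: "deriv L G (Imp p (Or p q))" by (rule deriv.ipc) (rule ipc_axiom.intros)
lemma ax7: "deriv L G (Imp q (Or p q))" by (rule deriv.ipc) (rule ipc_axiom.intros)
lemma ax8: "deriv L G (Imp (Imp p r) (Imp (Imp q r) (Imp (Or p q) r)))" by (rule deriv.ipc) (rule ipc_axiom.intros)
lemma ax9: "deriv L G (Imp Bot p)" by (rule deriv.ipc) (rule ipc_axiom.intros)

lemma mp: "deriv L G (Imp a b) \<Longrightarrow> deriv L G a \<Longrightarrow> deriv L G b"
  by (rule deriv.MP)

lemma weak: "deriv L G b \<Longrightarrow> deriv L G (Imp a b)"
  by (rule mp[OF ax1])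

lemma imp_refl: "deriv L G (Imp a a)"
proof -
  have "deriv L G (Imp (Imp a (Imp (Imp a a) a)) (Imp (Imp a (Imp a a)) (Imp a a)))" by (rule ax2)
  then have "deriv L G (Imp (Imp a (Imp a a)) (Imp a a))" using ax1 by (rule mp)
  then show ?thesis using ax1 by (rule mp)
qed

lemma deduction: "deriv L (insert a G) b \<Longrightarrow> deriv L G (Imp a b)"
proof (induction L "insert a G" b arbitrary: G rule: deriv.induct)
  case (ipc \<phi> Ax) show ?case using ipc(1) by (intro weak deriv.ipc)
next case (KBox Ax p q) show ?case by (intro weak deriv.KBox)
next case (KDia Ax p q) show ?case by (intro weak deriv.KDia)
next case (extra A Ax \<phi>) show ?case using extra(1,2) by (intro weak deriv.extra)
next
  case (El \<phi> Ax)
  show ?case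
  proof (cases "\<phi> = a")
    case True then show ?thesis using imp_refl by metis
  next
    case False then have "\<phi> \<in> G" using El by auto
    then show ?thesis by (intro weak deriv.El)
  qed
next
  case (MP Ax \<phi> \<psi>)
  have h1: "deriv Ax G (Imp a \<phi>)" using MP.hyps(2) by simp
  have h2: "deriv Ax G (Imp a (Imp \<phi> \<psi>))" using MP.hyps(4) by simp
  show ?case by (rule mp[OF mp[OF ax2 h2] h1])
next
  case (Nec Ax \<phi>)
  show ?case using Nec(1) by (intro weak deriv.Nec)
qed

lemma undeduct: "deriv L G (Imp a b) \<Longrightarrow> deriv L (insert a G) b"
  by (rule mp[OF deriv_mono deriv.El]) auto

lemma cut: "deriv L G a \<Longrightarrow> deriv L (insert a G) b \<Longrightarrow> deriv L G b"
  by (rule mp[OF deduction])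

lemma deriv_closed:
  assumes "deriv L G \<phi>" "G \<subseteq> E" "\<And>\<phi>. deriv L {} \<phi> \<Longrightarrow> \<phi> \<in> E"
    "\<And>a b. a \<in> E \<Longrightarrow> Imp a b \<in> E \<Longrightarrow> b \<in> E"
  shows "\<phi> \<in> E"
proof -
  have "deriv Ax G \<phi> \<Longrightarrow> Ax = L \<Longrightarrow> G \<subseteq> E \<Longrightarrow> \<phi> \<in> E" for Ax G \<phi>
  proof (induction rule: deriv.induct)
    case (ipc \<phi> Ax \<Gamma>) show ?case using ipc by (intro assms(3) deriv.ipc)
  next case (KBox Ax \<Gamma> p q) show ?case by (intro assms(3) deriv.KBox)
  next case (KDia Ax \<Gamma> p q) show ?case by (intro assms(3) deriv.KDia)
  next case (extra A Ax \<phi> \<Gamma>) show ?case using extra by (intro assms(3) deriv.extra) auto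
  next case (El \<phi> \<Gamma> Ax) show ?case using El by blast
  next case (MP Ax \<Gamma> \<phi> \<psi>) show ?case using MP assms(4) by blast
  next case (Nec Ax \<phi> \<Gamma>) show ?case using Nec by (intro assms(3)) (auto intro: deriv.Nec)
  qed
  then show ?thesis using assms(1,2) by blast
qed

lemma deriv_trans: "deriv L G \<phi> \<Longrightarrow> (\<And>g. g \<in> G \<Longrightarrow> deriv L H g) \<Longrightarrow> deriv L H \<phi>"
  using deriv_closed[of L G \<phi> "{\<phi>. deriv L H \<phi>}"]
  by (metis (no_types, lifting) deriv.MP deriv_mono empty_subsetI mem_Collect_eq subsetI)

lemma compact: "deriv L G \<phi> \<Longrightarrow> \<exists>G0. G0 \<subseteq> G \<and> finite G0 \<and> deriv L G0 \<phi>"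
proof (induction rule: deriv.induct)
  case (ipc \<phi> Ax \<Gamma>) show ?case using ipc(1) by (intro exI[of _ "{}"]) (auto intro: deriv.ipc)
next case (KBox Ax \<Gamma> p q) show ?case by (intro exI[of _ "{}"]) (auto intro: deriv.KBox)
next case (KDia Ax \<Gamma> p q) show ?case by (intro exI[of _ "{}"]) (auto intro: deriv.KDia)
next case (extra A Ax \<phi> \<Gamma>) show ?case using extra(1,2) by (intro exI[of _ "{}"]) (auto intro: deriv.extra)
next case (El \<phi> \<Gamma> Ax) show ?case using El by (intro exI[of _ "{\<phi>}"]) (auto intro: deriv.El)
next case (Nec Ax \<phi> \<Gamma>) show ?case using Nec(1) by (intro exI[of _ "{}"]) (auto intro: deriv.Nec)
next
  case (MP Ax \<Gamma> \<phi> \<psi>)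
  then obtain G1 G2 where "G1 \<subseteq> \<Gamma>" "finite G1" "deriv Ax G1 \<phi>" "G2 \<subseteq> \<Gamma>" "finite G2" "deriv Ax G2 (Imp \<phi> \<psi>)" by blast
  then show ?case
    by (intro exI[of _ "G1 \<union> G2"]) (meson Un_least deriv.MP deriv_mono finite_UnI sup.cobounded1 sup.cobounded2)
qed

lemma box_mono: "deriv L {} (Imp a b) \<Longrightarrow> deriv L G (Imp (Box a) (Box b))"
  by (rule mp[OF deriv.KBox deriv.Nec])

lemma dia_mono: "deriv L {} (Imp a b) \<Longrightarrow> deriv L G (Imp (Dia a) (Dia b))"
  by (rule mp[OF deriv.KDia deriv.Nec])

lemma imp_trans: "deriv L G (Imp a b) \<Longrightarrow> deriv L G (Imp b c) \<Longrightarrow> deriv L G (Imp a c)"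
proof -
  assume h1: "deriv L G (Imp a b)" and h2: "deriv L G (Imp b c)"
  have "deriv L (insert a G) b" using h1 by (rule undeduct)
  moreover have "deriv L (insert a G) (Imp b c)" using h2 by (rule deriv_mono) auto
  ultimately have "deriv L (insert a G) c" by (metis mp)
  then show ?thesis by (rule deduction)
qed

lemma or_elim: "deriv L G (Or a b) \<Longrightarrow> deriv L (insert a G) c \<Longrightarrow> deriv L (insert b G) c \<Longrightarrow> deriv L G c"
  by (rule mp[OF mp[OF mp[OF ax8 deduction] deduction]])

lemma thm_any: "deriv L {} \<phi> \<Longrightarrow> deriv L G \<phi>"
  by (erule deriv_mono) auto

definition thy :: "ax set \<Rightarrow> fm set \<Rightarrow> bool" where
  "thy L \<Gamma> \<longleftrightarrow> (\<forall>\<phi>. deriv L \<Gamma> \<phi> \<longrightarrow> \<phi> \<in> \<Gamma>)"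

definition pthy :: "ax set \<Rightarrow> fm set \<Rightarrow> bool" where
  "pthy L \<Gamma> \<longleftrightarrow> thy L \<Gamma> \<and> (\<forall>a b. Or a b \<in> \<Gamma> \<longrightarrow> a \<in> \<Gamma> \<or> b \<in> \<Gamma>)"

lemma thyD: "thy L \<Gamma> \<Longrightarrow> deriv L \<Gamma> \<phi> \<Longrightarrow> \<phi> \<in> \<Gamma>"
  unfolding thy_def by blast

lemma thy_thm: "thy L \<Gamma> \<Longrightarrow> deriv L {} \<phi> \<Longrightarrow> \<phi> \<in> \<Gamma>"
  by (erule thyD) (erule thm_any)

lemma thy_mp: "thy L \<Gamma> \<Longrightarrow> Imp a b \<in> \<Gamma> \<Longrightarrow> a \<in> \<Gamma> \<Longrightarrow> b \<in> \<Gamma>"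
  by (erule thyD) (rule mp[OF deriv.El deriv.El])

lemma thy_thm_mp: "thy L \<Gamma> \<Longrightarrow> deriv L {} (Imp a b) \<Longrightarrow> a \<in> \<Gamma> \<Longrightarrow> b \<in> \<Gamma>"
  using thy_mp thy_thm by blast

lemma thy_and: "thy L \<Gamma> \<Longrightarrow> And a b \<in> \<Gamma> \<longleftrightarrow> a \<in> \<Gamma> \<and> b \<in> \<Gamma>"
  by (meson ax3 ax4 ax5 deriv.El mp thyD)

lemma thy_or: "pthy L \<Gamma> \<Longrightarrow> Or a b \<in> \<Gamma> \<longleftrightarrow> a \<in> \<Gamma> \<or> b \<in> \<Gamma>"
  unfolding pthy_def by (meson ax6 ax7 thy_thm_mp)

lemma thy_bot: "thy L \<Gamma> \<Longrightarrow> Bot \<in> \<Gamma> \<Longrightarrow> \<Gamma> = UNIV"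
proof -
  assume a: "thy L \<Gamma>" "Bot \<in> \<Gamma>"
  have "\<phi> \<in> \<Gamma>" for \<phi> using thy_thm_mp[OF a(1) ax9 a(2)] .
  then show ?thesis by auto
qed

lemma pthy_UNIV: "pthy L UNIV"
  unfolding pthy_def thy_def by auto

lemma lindenbaum:
  assumes nd: "\<forall>i\<in>I. \<not> deriv L G i"
    and orc: "\<forall>i1\<in>I. \<forall>i2\<in>I. \<exists>i\<in>I. deriv L {} (Imp (Or i1 i2) i)"
  shows "\<exists>\<Delta>. pthy L \<Delta> \<and> G \<subseteq> \<Delta> \<and> \<Delta> \<inter> I = {}"
proof -
  define A where "A = {\<Delta>. G \<subseteq> \<Delta> \<and> (\<forall>i\<in>I. \<not> deriv L \<Delta> i)}"
  have "\<exists>U\<in>A. \<forall>X\<in>C. X \<subseteq> U" if C: "C \<in> chains A" for C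
  proof (cases "C = {}")
    case True then show ?thesis using nd A_def by auto
  next
    case False
    have "\<Union>C \<in> A"
    proof -
      have "G \<subseteq> \<Union>C" using C False unfolding chains_def A_def by auto
      moreover have "\<not> deriv L (\<Union>C) i" if "i \<in> I" for i
      proof
        assume "deriv L (\<Union>C) i"
        then obtain G0 where G0: "G0 \<subseteq> \<Union>C" "finite G0" "deriv L G0 i" using compact by blast
        have "subset.chain UNIV C" using C unfolding chains_def chain_subset_alt_def by auto
        then obtain B where "B \<in> C" "G0 \<subseteq> B" using finite_subset_Union_chain[OF G0(2,1) False] by blast
        then have "deriv L B i" using G0(3) deriv_mono by blast
        then show False using \<open>B \<in> C\<close> C that unfolding chains_def A_def by auto
      qed
      ultimately show ?thesis unfolding A_def by auto
    qed
    then show ?thesis by blast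
  qed
  then obtain M where M: "M \<in> A" and max: "\<forall>X\<in>A. M \<subseteq> X \<longrightarrow> X = M"
    using Zorn_Lemma2[of A] by blast
  have cl: "\<phi> \<in> M" if "deriv L M \<phi>" for \<phi>
  proof -
    have "insert \<phi> M \<in> A" using M that cut unfolding A_def by blast
    then show ?thesis using max by blast
  qed
  have pr: "a \<in> M \<or> b \<in> M" if "Or a b \<in> M" for a b
  proof (rule ccontr)
    assume "\<not> (a \<in> M \<or> b \<in> M)"
    then have "insert a M \<notin> A" "insert b M \<notin> A" using max by blast+
    then obtain i1 i2 where i: "i1 \<in> I" "deriv L (insert a M) i1" "i2 \<in> I" "deriv L (insert b M) i2"
      using M unfolding A_def by blast
    obtain i where "i \<in> I" "deriv L {} (Imp (Or i1 i2) i)" using orc i by blast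
    have "deriv L (insert a M) (Or i1 i2)" using i(2) by (rule mp[OF ax6])
    moreover have "deriv L (insert b M) (Or i1 i2)" using i(4) by (rule mp[OF ax7])
    ultimately have "deriv L M (Or i1 i2)" using that or_elim deriv.El by blast
    then have "deriv L M i" using \<open>deriv L {} (Imp (Or i1 i2) i)\<close> thm_any mp by blast
    then show False using M \<open>i \<in> I\<close> unfolding A_def by blast
  qed
  have "M \<inter> I = {}" using M deriv.El unfolding A_def by blast
  then show ?thesis using M cl pr unfolding pthy_def thy_def A_def by blast
qed

lemma lindenbaum1:
  assumes "\<not> deriv L G \<psi>"
  shows "\<exists>\<Delta>. pthy L \<Delta> \<and> G \<subseteq> \<Delta> \<and> \<psi> \<notin> \<Delta>"
proof -
  have "deriv L {} (Imp (Or \<psi> \<psi>) \<psi>)"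
    by (rule mp[OF mp[OF ax8 imp_refl] imp_refl])
  then show ?thesis using lindenbaum[of "{\<psi>}" L G] assms by auto
qed

definition boxinv :: "fm set \<Rightarrow> fm set" where "boxinv \<Gamma> = {\<phi>. Box \<phi> \<in> \<Gamma>}"

lemma box_mp1: "thy L \<Gamma> \<Longrightarrow> deriv L {} (Imp X Z) \<Longrightarrow> Box X \<in> \<Gamma> \<Longrightarrow> Box Z \<in> \<Gamma>"
  by (meson box_mono thy_thm_mp)

lemma box_mp2: "thy L \<Gamma> \<Longrightarrow> deriv L {} (Imp X (Imp Y Z)) \<Longrightarrow> Box X \<in> \<Gamma> \<Longrightarrow> Box Y \<in> \<Gamma> \<Longrightarrow> Box Z \<in> \<Gamma>"
proof -
  assume a: "thy L \<Gamma>" "deriv L {} (Imp X (Imp Y Z))" "Box X \<in> \<Gamma>" "Box Y \<in> \<Gamma>"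
  have "Box (Imp Y Z) \<in> \<Gamma>" using box_mp1[OF a(1,2,3)] .
  moreover have "Imp (Box (Imp Y Z)) (Imp (Box Y) (Box Z)) \<in> \<Gamma>" using a(1) deriv.KBox thy_thm by blast
  ultimately show ?thesis using a(1,4) thy_mp by blast
qed

lemma dia_mp: "thy L \<Gamma> \<Longrightarrow> Box (Imp X Z) \<in> \<Gamma> \<Longrightarrow> Dia X \<in> \<Gamma> \<Longrightarrow> Dia Z \<in> \<Gamma>"
proof -
  assume a: "thy L \<Gamma>" "Box (Imp X Z) \<in> \<Gamma>" "Dia X \<in> \<Gamma>"
  have "Imp (Box (Imp X Z)) (Imp (Dia X) (Dia Z)) \<in> \<Gamma>" using a(1) deriv.KDia thy_thm by blast
  then show ?thesis using a thy_mp by blast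
qed

lemma box_thm: "thy L \<Gamma> \<Longrightarrow> deriv L {} X \<Longrightarrow> Box X \<in> \<Gamma>"
  using deriv.Nec thy_thm by blast

lemma box_lemma:
  assumes "thy L \<Gamma>" "deriv L (boxinv \<Gamma>) \<phi>"
  shows "Box \<phi> \<in> \<Gamma>"
proof -
  have "\<phi> \<in> boxinv \<Gamma>"
  proof (rule deriv_closed[OF assms(2)])
    show "\<And>\<phi>. deriv L {} \<phi> \<Longrightarrow> \<phi> \<in> boxinv \<Gamma>" using box_thm[OF assms(1)] boxinv_def by auto
    show "\<And>a b. a \<in> boxinv \<Gamma> \<Longrightarrow> Imp a b \<in> boxinv \<Gamma> \<Longrightarrow> b \<in> boxinv \<Gamma>"
      unfolding boxinv_def using box_mp2[OF assms(1) imp_refl] by blast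
  qed auto
  then show ?thesis unfolding boxinv_def by auto
qed

lemma comb_thm: "deriv L {} (Imp (Imp t1 a) (Imp (Imp t2 (Imp a b)) (Imp (And t1 t2) b)))"
proof -
  let ?G = "{And t1 t2, Imp t2 (Imp a b), Imp t1 a}"
  have e: "deriv L ?G x" if "x \<in> ?G" for x using that by (rule deriv.El)
  have t1: "deriv L ?G t1" by (rule mp[OF ax3 e]) auto
  have t2: "deriv L ?G t2" by (rule mp[OF ax4 e]) auto
  have "deriv L ?G a" by (rule mp[OF e t1]) auto
  moreover have "deriv L ?G (Imp a b)" by (rule mp[OF e t2]) auto
  ultimately have "deriv L ?G b" by (metis mp)
  then show ?thesis by (metis deduction insert_commute)
qed

lemma dia_lemma:
  assumes G: "thy L \<Gamma>" and T: "thy L T" and D: "\<forall>\<theta>\<in>T. Dia \<theta> \<in> \<Gamma>"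
    and d: "deriv L (T \<union> boxinv \<Gamma>) \<psi>"
  shows "Dia \<psi> \<in> \<Gamma>"
proof -
  define E where "E = {\<phi>. \<exists>\<theta>\<in>T. Box (Imp \<theta> \<phi>) \<in> \<Gamma>}"
  have t0: "Imp Bot Bot \<in> T" using T thy_thm imp_refl by blast
  have "\<psi> \<in> E"
  proof (rule deriv_closed[OF d])
    show "T \<union> boxinv \<Gamma> \<subseteq> E"
    proof
      fix x assume "x \<in> T \<union> boxinv \<Gamma>"
      then show "x \<in> E"
      proof
        assume "x \<in> T" then show ?thesis unfolding E_def using box_thm[OF G imp_refl] by blast
      next
        assume "x \<in> boxinv \<Gamma>"
        then have "Box (Imp (Imp Bot Bot) x) \<in> \<Gamma>" using box_mp1[OF G ax1] unfolding boxinv_def by blast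
        then show ?thesis unfolding E_def using t0 by blast
      qed
    qed
    show "\<phi> \<in> E" if "deriv L {} \<phi>" for \<phi>
      unfolding E_def using t0 box_thm[OF G weak[OF that]] by blast
    show "b \<in> E" if h: "a \<in> E" "Imp a b \<in> E" for a b
    proof -
      obtain t1 t2 where "t1 \<in> T" "t2 \<in> T" "Box (Imp t1 a) \<in> \<Gamma>" "Box (Imp t2 (Imp a b)) \<in> \<Gamma>"
        using h unfolding E_def by blast
      moreover have "And t1 t2 \<in> T" using calculation thy_and[OF T] by blast
      ultimately show ?thesis unfolding E_def using box_mp2[OF G comb_thm] by blast
    qed
  qed
  then obtain \<theta> where "\<theta> \<in> T" "Box (Imp \<theta> \<psi>) \<in> \<Gamma>" unfolding E_def by blast
  then show ?thesis using D dia_mp[OF G] by blast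
qed

lemma dia_lemma1:
  assumes G: "thy L \<Gamma>" and D: "Dia \<chi> \<in> \<Gamma>" and d: "deriv L (insert \<chi> (boxinv \<Gamma>)) \<psi>"
  shows "Dia \<psi> \<in> \<Gamma>"
proof -
  define T where "T = {\<theta>. deriv L {\<chi>} \<theta>}"
  have T: "thy L T" unfolding thy_def T_def using deriv_trans by blast
  have "\<forall>\<theta>\<in>T. Dia \<theta> \<in> \<Gamma>" unfolding T_def
    by (metis D G deduction dia_mono insert_absorb2 insert_not_empty mem_Collect_eq singleton_insert_inj_eq' thy_thm_mp)
  moreover have "deriv L (T \<union> boxinv \<Gamma>) \<psi>"
    using d by (rule deriv_mono) (auto simp: T_def intro: deriv.El)
  ultimately show ?thesis using dia_lemma[OF G T] by blast
qed

definition Sd :: "fm set \<Rightarrow> fm set" where "Sd \<Gamma> = {\<phi>. Dia \<phi> \<notin> \<Gamma>}"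

definition Succ :: "ax set \<Rightarrow> fm set \<Rightarrow> fm set \<Rightarrow> fm set set" where
  "Succ L \<Gamma> A = {\<Delta>. pthy L \<Delta> \<and> boxinv \<Gamma> \<subseteq> \<Delta> \<and> \<Delta> \<inter> A = {}}"

definition world :: "ax set \<Rightarrow> fm set \<Rightarrow> fm set \<Rightarrow> bool" where
  "world L \<Gamma> A \<longleftrightarrow> pthy L \<Gamma> \<and> A \<subseteq> Sd \<Gamma> \<and> (Dia Bot \<notin> \<Gamma> \<longrightarrow> Bot \<in> A) \<and>
     (\<forall>\<psi>. Dia \<psi> \<in> \<Gamma> \<longrightarrow> (\<exists>\<Delta>\<in>Succ L \<Gamma> A. \<psi> \<in> \<Delta>)) \<and>
     (\<forall>T. pthy L T \<longrightarrow> (\<forall>\<theta>\<in>T. Dia \<theta> \<in> \<Gamma>) \<longrightarrow> (\<exists>\<Delta>\<in>Succ L \<Gamma> A. T \<subseteq> \<Delta>))"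

definition AW :: "fm set \<Rightarrow> fm set" where "AW \<Gamma> = {Bot} \<inter> Sd \<Gamma>"

lemma pthy_thy: "pthy L \<Gamma> \<Longrightarrow> thy L \<Gamma>" unfolding pthy_def by auto

lemma dia_bot_any: "thy L \<Gamma> \<Longrightarrow> Dia Bot \<in> \<Gamma> \<Longrightarrow> Dia \<psi> \<in> \<Gamma>"
  using dia_mp box_thm ax9 by blast

lemma W_world:
  assumes G: "pthy L \<Gamma>"
  shows "world L \<Gamma> (AW \<Gamma>)"
proof (cases "Dia Bot \<in> \<Gamma>")
  case True
  then have "AW \<Gamma> = {}" unfolding AW_def Sd_def by auto
  then have "UNIV \<in> Succ L \<Gamma> (AW \<Gamma>)" unfolding Succ_def using pthy_UNIV by auto
  then show ?thesis using G True unfolding world_def AW_def by blast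
next
  case False
  then have A: "AW \<Gamma> = {Bot}" unfolding AW_def Sd_def by auto
  have "\<exists>\<Delta>\<in>Succ L \<Gamma> (AW \<Gamma>). \<psi> \<in> \<Delta>" if "Dia \<psi> \<in> \<Gamma>" for \<psi>
  proof -
    have "\<not> deriv L (insert \<psi> (boxinv \<Gamma>)) Bot" using dia_lemma1[OF pthy_thy[OF G] that] False by blast
    then obtain \<Delta> where "pthy L \<Delta>" "insert \<psi> (boxinv \<Gamma>) \<subseteq> \<Delta>" "Bot \<notin> \<Delta>" using lindenbaum1 by blast
    then show ?thesis unfolding Succ_def A by auto
  qed
  moreover have "\<exists>\<Delta>\<in>Succ L \<Gamma> (AW \<Gamma>). T \<subseteq> \<Delta>" if "pthy L T" "\<forall>\<theta>\<in>T. Dia \<theta> \<in> \<Gamma>" for T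
  proof -
    have "\<not> deriv L (T \<union> boxinv \<Gamma>) Bot" using dia_lemma[OF pthy_thy[OF G] pthy_thy[OF that(1)] that(2)] False by blast
    then obtain \<Delta> where "pthy L \<Delta>" "T \<union> boxinv \<Gamma> \<subseteq> \<Delta>" "Bot \<notin> \<Delta>" using lindenbaum1 by blast
    then show ?thesis unfolding Succ_def A by auto
  qed
  ultimately show ?thesis using G False unfolding world_def AW_def Sd_def by auto
qed

lemma P_world:
  assumes G: "pthy L \<Gamma>" and D: "Dia \<psi> \<notin> \<Gamma>"
  shows "world L \<Gamma> {\<psi>, Bot}"
proof -
  have F: "Dia Bot \<notin> \<Gamma>" using D dia_bot_any pthy_thy[OF G] by blast
  have sub: "\<Delta> \<in> Succ L \<Gamma> {\<psi>, Bot}" if "pthy L \<Delta>" "boxinv \<Gamma> \<subseteq> \<Delta>" "\<psi> \<notin> \<Delta>" for \<Delta>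
    using that thy_bot[OF pthy_thy[OF that(1)]] unfolding Succ_def by auto
  have "\<exists>\<Delta>\<in>Succ L \<Gamma> {\<psi>, Bot}. \<chi> \<in> \<Delta>" if "Dia \<chi> \<in> \<Gamma>" for \<chi>
  proof -
    have "\<not> deriv L (insert \<chi> (boxinv \<Gamma>)) \<psi>" using dia_lemma1[OF pthy_thy[OF G] that] D by blast
    then obtain \<Delta> where "pthy L \<Delta>" "insert \<chi> (boxinv \<Gamma>) \<subseteq> \<Delta>" "\<psi> \<notin> \<Delta>" using lindenbaum1 by blast
    then show ?thesis using sub by blast
  qed
  moreover have "\<exists>\<Delta>\<in>Succ L \<Gamma> {\<psi>, Bot}. T \<subseteq> \<Delta>" if "pthy L T" "\<forall>\<theta>\<in>T. Dia \<theta> \<in> \<Gamma>" for T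
  proof -
    have "\<not> deriv L (T \<union> boxinv \<Gamma>) \<psi>" using dia_lemma[OF pthy_thy[OF G] pthy_thy[OF that(1)] that(2)] D by blast
    then obtain \<Delta> where "pthy L \<Delta>" "T \<union> boxinv \<Gamma> \<subseteq> \<Delta>" "\<psi> \<notin> \<Delta>" using lindenbaum1 by blast
    then show ?thesis using sub by blast
  qed
  ultimately show ?thesis using G D F unfolding world_def Sd_def by auto
qed

lemma cd_thm: "CD \<in> L \<Longrightarrow> deriv L G (Imp (Dia (Or p q)) (Or (Dia p) (Dia q)))"
  by (rule deriv.extra[of CD]) auto

lemma C_world:
  assumes G: "pthy L \<Gamma>" and cd: "CD \<in> L"
  shows "world L \<Gamma> (Sd \<Gamma>)"
proof -
  have orc: "\<forall>i1\<in>Sd \<Gamma>. \<forall>i2\<in>Sd \<Gamma>. \<exists>i\<in>Sd \<Gamma>. deriv L {} (Imp (Or i1 i2) i)"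
  proof (intro ballI)
    fix i1 i2 assume i: "i1 \<in> Sd \<Gamma>" "i2 \<in> Sd \<Gamma>"
    have "Or i1 i2 \<in> Sd \<Gamma>"
    proof -
      have "Dia (Or i1 i2) \<notin> \<Gamma>"
      proof
        assume "Dia (Or i1 i2) \<in> \<Gamma>"
        then have "Or (Dia i1) (Dia i2) \<in> \<Gamma>" using thy_thm_mp[OF pthy_thy[OF G] cd_thm[OF cd]] by blast
        then show False using i thy_or[OF G] unfolding Sd_def by blast
      qed
      then show ?thesis unfolding Sd_def by auto
    qed
    then show "\<exists>i\<in>Sd \<Gamma>. deriv L {} (Imp (Or i1 i2) i)" using imp_refl by blast
  qed
  have "\<exists>\<Delta>\<in>Succ L \<Gamma> (Sd \<Gamma>). \<psi> \<in> \<Delta>" if "Dia \<psi> \<in> \<Gamma>" for \<psi>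
  proof -
    have "\<forall>i\<in>Sd \<Gamma>. \<not> deriv L (insert \<psi> (boxinv \<Gamma>)) i" using dia_lemma1[OF pthy_thy[OF G] that] unfolding Sd_def by blast
    then obtain \<Delta> where "pthy L \<Delta>" "insert \<psi> (boxinv \<Gamma>) \<subseteq> \<Delta>" "\<Delta> \<inter> Sd \<Gamma> = {}" using lindenbaum[OF _ orc] by blast
    then show ?thesis unfolding Succ_def by auto
  qed
  moreover have "\<exists>\<Delta>\<in>Succ L \<Gamma> (Sd \<Gamma>). T \<subseteq> \<Delta>" if "pthy L T" "\<forall>\<theta>\<in>T. Dia \<theta> \<in> \<Gamma>" for T
  proof -
    have "\<forall>i\<in>Sd \<Gamma>. \<not> deriv L (T \<union> boxinv \<Gamma>) i" using dia_lemma[OF pthy_thy[OF G] pthy_thy[OF that(1)] that(2)] unfolding Sd_def by blast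
    then obtain \<Delta> where "pthy L \<Delta>" "T \<union> boxinv \<Gamma> \<subseteq> \<Delta>" "\<Delta> \<inter> Sd \<Gamma> = {}" using lindenbaum[OF _ orc] by blast
    then show ?thesis unfolding Succ_def by auto
  qed
  ultimately show ?thesis using G unfolding world_def Sd_def by auto
qed

definition CX :: "ax set \<Rightarrow> (fm set \<times> fm set) set" where "CX L = {(\<Gamma>, A). world L \<Gamma> A}"
definition ce :: "fm set \<times> fm set" where "ce = (UNIV, {})"
definition cle :: "ax set \<Rightarrow> fm set \<times> fm set \<Rightarrow> fm set \<times> fm set \<Rightarrow> bool" where
  "cle L w v \<longleftrightarrow> w \<in> CX L \<and> v \<in> CX L \<and> fst w \<subseteq> fst v"
definition cR :: "ax set \<Rightarrow> fm set \<times> fm set \<Rightarrow> fm set \<times> fm set \<Rightarrow> bool" where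
  "cR L w v \<longleftrightarrow> w \<in> CX L \<and> v \<in> CX L \<and> fst v \<in> Succ L (fst w) (snd w)"
definition cV :: "ax set \<Rightarrow> nat \<Rightarrow> (fm set \<times> fm set) set" where
  "cV L p = {w \<in> CX L. Var p \<in> fst w}"

lemma e_world: "world L UNIV {}"
  unfolding world_def Succ_def Sd_def using pthy_UNIV by auto

lemma ce_CX: "ce \<in> CX L" unfolding ce_def CX_def using e_world by auto

lemma world_univ: "world L UNIV A \<Longrightarrow> A = {}"
  unfolding world_def Sd_def by auto

lemma CX_world: "w \<in> CX L \<Longrightarrow> world L (fst w) (snd w)" unfolding CX_def by auto

lemma CX_pthy: "w \<in> CX L \<Longrightarrow> pthy L (fst w)" unfolding CX_def world_def by auto

lemma CX_eq_ce: "w \<in> CX L \<Longrightarrow> fst w = UNIV \<Longrightarrow> w = ce"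
  unfolding CX_def ce_def using world_univ by (cases w) auto

lemma succ_world: "pthy L \<Delta> \<Longrightarrow> (\<Delta>, AW \<Delta>) \<in> CX L"
  unfolding CX_def using W_world by auto

lemma ck_canon: "ck_frame (CX L) ce (cle L) (cR L)"
  unfolding ck_frame_def
proof (intro conjI)
  show "\<forall>x\<in>CX L. cle L ce x \<longrightarrow> x = ce"
    unfolding cle_def ce_def using CX_eq_ce[of _ L] by (auto simp: ce_def)
  show "\<forall>x\<in>CX L. cR L ce x = (x = ce)"
  proof
    fix x assume x: "x \<in> CX L"
    have "fst x \<in> Succ L UNIV {} \<longleftrightarrow> fst x = UNIV"
      using CX_pthy[OF x] pthy_UNIV unfolding Succ_def boxinv_def by auto
    then show "cR L ce x = (x = ce)" using x ce_CX CX_eq_ce[OF x] unfolding cR_def by (auto simp: ce_def)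
  qed
qed (auto simp: cle_def cR_def ce_CX)

lemma truth:
  assumes "w \<in> CX L"
  shows "forces (CX L) ce (cle L) (cR L) (cV L) w \<phi> \<longleftrightarrow> \<phi> \<in> fst w"
  using assms
proof (induction \<phi> arbitrary: w)
  case (Var x)
  then show ?case by (auto simp: cV_def)
next
  case Bot
  have "Bot \<in> fst w \<Longrightarrow> fst w = UNIV" using thy_bot[OF pthy_thy[OF CX_pthy[OF Bot]]] by blast
  then show ?case using CX_eq_ce[OF Bot] by (auto simp: ce_def)
next
  case (And \<phi>1 \<phi>2)
  then show ?case using thy_and[OF pthy_thy[OF CX_pthy[OF And(3)]]] by auto
next
  case (Or \<phi>1 \<phi>2)
  then show ?case using thy_or[OF CX_pthy[OF Or(3)]] by auto
next
  case (Imp a b)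
  have G: "pthy L (fst w)" using CX_pthy[OF Imp(3)] .
  show ?case
  proof
    assume f: "forces (CX L) ce (cle L) (cR L) (cV L) w (Imp a b)"
    show "Imp a b \<in> fst w"
    proof (rule ccontr)
      assume n: "Imp a b \<notin> fst w"
      have "\<not> deriv L (insert a (fst w)) b"
        using n deduction thyD[OF pthy_thy[OF G]] by blast
      then obtain \<Gamma>' where g: "pthy L \<Gamma>'" "insert a (fst w) \<subseteq> \<Gamma>'" "b \<notin> \<Gamma>'" using lindenbaum1 by blast
      let ?y = "(\<Gamma>', AW \<Gamma>')"
      have y: "?y \<in> CX L" using succ_world[OF g(1)] .
      have "cle L w ?y" using y Imp(3) g(2) unfolding cle_def by auto
      moreover have "forces (CX L) ce (cle L) (cR L) (cV L) ?y a" using Imp.IH(1)[OF y] g(2) by auto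
      ultimately have "forces (CX L) ce (cle L) (cR L) (cV L) ?y b" using f y by auto
      then show False using Imp.IH(2)[OF y] g(3) by auto
    qed
  next
    assume i: "Imp a b \<in> fst w"
    show "forces (CX L) ce (cle L) (cR L) (cV L) w (Imp a b)"
    proof (simp, intro ballI impI)
      fix y assume y: "y \<in> CX L" "cle L w y" "forces (CX L) ce (cle L) (cR L) (cV L) y a"
      have "a \<in> fst y" using Imp.IH(1)[OF y(1)] y(3) by auto
      moreover have "Imp a b \<in> fst y" using i y(2) unfolding cle_def by auto
      ultimately have "b \<in> fst y" using thy_mp[OF pthy_thy[OF CX_pthy[OF y(1)]]] by blast
      then show "forces (CX L) ce (cle L) (cR L) (cV L) y b" using Imp.IH(2)[OF y(1)] by auto
    qed
  qed
next
  case (Box \<phi>)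
  have G: "pthy L (fst w)" using CX_pthy[OF Box(2)] .
  show ?case
  proof
    assume f: "forces (CX L) ce (cle L) (cR L) (cV L) w (Box \<phi>)"
    show "Box \<phi> \<in> fst w"
    proof (rule ccontr)
      assume n: "Box \<phi> \<notin> fst w"
      have "\<not> deriv L (boxinv (fst w)) \<phi>" using n box_lemma[OF pthy_thy[OF G]] by blast
      then obtain \<Delta> where d: "pthy L \<Delta>" "boxinv (fst w) \<subseteq> \<Delta>" "\<phi> \<notin> \<Delta>" using lindenbaum1 by blast
      have "Bot \<notin> \<Delta>" using d thy_bot[OF pthy_thy[OF d(1)]] by auto
      let ?y = "(fst w, AW (fst w))" and ?z = "(\<Delta>, AW \<Delta>)"
      have y: "?y \<in> CX L" using succ_world[OF G] .
      have z: "?z \<in> CX L" using succ_world[OF d(1)] .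
      have "cle L w ?y" using y Box(2) unfolding cle_def by auto
      moreover have "cR L ?y ?z" using y z d \<open>Bot \<notin> \<Delta>\<close> unfolding cR_def Succ_def AW_def by auto
      ultimately have "forces (CX L) ce (cle L) (cR L) (cV L) ?z \<phi>" using f y z by auto
      then show False using Box.IH[OF z] d(3) by auto
    qed
  next
    assume i: "Box \<phi> \<in> fst w"
    show "forces (CX L) ce (cle L) (cR L) (cV L) w (Box \<phi>)"
    proof (simp, intro ballI impI)
      fix y z assume yz: "y \<in> CX L" "z \<in> CX L" "cle L w y" "cR L y z"
      have "Box \<phi> \<in> fst y" using i yz(3) unfolding cle_def by auto
      then have "\<phi> \<in> fst z" using yz(4) unfolding cR_def Succ_def boxinv_def by auto
      then show "forces (CX L) ce (cle L) (cR L) (cV L) z \<phi>" using Box.IH[OF yz(2)] by auto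
    qed
  qed
next
  case (Dia \<psi>)
  have G: "pthy L (fst w)" using CX_pthy[OF Dia(2)] .
  show ?case
  proof
    assume f: "forces (CX L) ce (cle L) (cR L) (cV L) w (Dia \<psi>)"
    show "Dia \<psi> \<in> fst w"
    proof (rule ccontr)
      assume n: "Dia \<psi> \<notin> fst w"
      let ?y = "(fst w, {\<psi>, Bot})"
      have y: "?y \<in> CX L" using P_world[OF G n] unfolding CX_def by auto
      have "cle L w ?y" using y Dia(2) unfolding cle_def by auto
      then obtain z where z: "z \<in> CX L" "cR L ?y z" "forces (CX L) ce (cle L) (cR L) (cV L) z \<psi>"
        using f y by auto
      have "\<psi> \<notin> fst z" using z(2) unfolding cR_def Succ_def by auto
      then show False using Dia.IH[OF z(1)] z(3) by auto
    qed
  next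
    assume i: "Dia \<psi> \<in> fst w"
    show "forces (CX L) ce (cle L) (cR L) (cV L) w (Dia \<psi>)"
    proof (simp, intro ballI impI)
      fix y assume y: "y \<in> CX L" "cle L w y"
      have "Dia \<psi> \<in> fst y" using i y(2) unfolding cle_def by auto
      then obtain \<Delta> where d: "\<Delta> \<in> Succ L (fst y) (snd y)" "\<psi> \<in> \<Delta>"
        using CX_world[OF y(1)] unfolding world_def by blast
      have dp: "pthy L \<Delta>" using d(1) unfolding Succ_def by auto
      let ?z = "(\<Delta>, AW \<Delta>)"
      have z: "?z \<in> CX L" using succ_world[OF dp] .
      have "cR L y ?z" using y(1) z d(1) unfolding cR_def by auto
      moreover have "forces (CX L) ce (cle L) (cR L) (cV L) ?z \<psi>" using Dia.IH[OF z] d(2) by auto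
      ultimately show "\<exists>z\<in>CX L. cR L y z \<and> forces (CX L) ce (cle L) (cR L) (cV L) z \<psi>" using z by blast
    qed
  qed
qed

lemma ndb_thm: "NDB \<in> L \<Longrightarrow> deriv L G (Imp (Dia Bot) (Box Bot))"
  by (rule deriv.extra[of NDB]) auto

lemma idb_thm: "IDB \<in> L \<Longrightarrow> deriv L G (Imp (Imp (Dia p) (Box q)) (Box (Imp p q)))"
  by (rule deriv.extra[of IDB]) auto

lemma comb2_thm: "deriv L {} (Imp (Imp D1 a) (Imp (Imp D2 (Imp a b)) (Imp (Imp D D1) (Imp (Imp D D2) (Imp D b)))))"
proof -
  let ?G = "{D, Imp D D2, Imp D D1, Imp D2 (Imp a b), Imp D1 a}"
  have e: "deriv L ?G x" if "x \<in> ?G" for x using that by (rule deriv.El)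
  have d1: "deriv L ?G D1" by (rule mp[OF e[of "Imp D D1"] e[of D]]) auto
  have d2: "deriv L ?G D2" by (rule mp[OF e[of "Imp D D2"] e[of D]]) auto
  have "deriv L ?G a" by (rule mp[OF e[of "Imp D1 a"] d1]) auto
  moreover have "deriv L ?G (Imp a b)" by (rule mp[OF e[of "Imp D2 (Imp a b)"] d2]) auto
  ultimately have "deriv L ?G b" by (metis mp)
  then show ?thesis by (metis deduction insert_commute)
qed

lemma idb_lemma:
  assumes idb: "IDB \<in> L" and G: "pthy L \<Gamma>" and T: "pthy L \<Theta>" and sub: "boxinv \<Gamma> \<subseteq> \<Theta>"
  shows "\<exists>\<Gamma>u. pthy L \<Gamma>u \<and> \<Gamma> \<subseteq> \<Gamma>u \<and> (\<forall>\<theta>\<in>\<Theta>. Dia \<theta> \<in> \<Gamma>u) \<and> boxinv \<Gamma>u \<subseteq> \<Theta>"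
proof -
  have Gt: "thy L \<Gamma>" using G pthy_thy by blast
  have Tt: "thy L \<Theta>" using T pthy_thy by blast
  define E where "E = {\<phi>. \<exists>\<theta>\<in>\<Theta>. Imp (Dia \<theta>) \<phi> \<in> \<Gamma>}"
  have t0: "Imp Bot Bot \<in> \<Theta>" using Tt thy_thm imp_refl by blast
  have inE: "\<phi> \<in> E" if "deriv L (\<Gamma> \<union> Dia ` \<Theta>) \<phi>" for \<phi>
  proof (rule deriv_closed[OF that])
    show "\<Gamma> \<union> Dia ` \<Theta> \<subseteq> E"
    proof
      fix x assume "x \<in> \<Gamma> \<union> Dia ` \<Theta>"
      then show "x \<in> E"
      proof
        assume "x \<in> \<Gamma>" then have "Imp (Dia (Imp Bot Bot)) x \<in> \<Gamma>" using thyD[OF Gt] weak deriv.El by blast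
        then show ?thesis unfolding E_def using t0 by blast
      next
        assume "x \<in> Dia ` \<Theta>" then show ?thesis unfolding E_def using thy_thm[OF Gt imp_refl] by blast
      qed
    qed
    show "\<phi> \<in> E" if "deriv L {} \<phi>" for \<phi>
      unfolding E_def using t0 thy_thm[OF Gt weak[OF that]] by blast
    show "b \<in> E" if h: "a \<in> E" "Imp a b \<in> E" for a b
    proof -
      obtain t1 t2 where t: "t1 \<in> \<Theta>" "t2 \<in> \<Theta>" "Imp (Dia t1) a \<in> \<Gamma>" "Imp (Dia t2) (Imp a b) \<in> \<Gamma>"
        using h unfolding E_def by blast
      have tt: "And t1 t2 \<in> \<Theta>" using t thy_and[OF Tt] by blast
      have m1: "Imp (Dia (And t1 t2)) (Dia t1) \<in> \<Gamma>" using thy_thm[OF Gt dia_mono[OF ax3]] .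
      have m2: "Imp (Dia (And t1 t2)) (Dia t2) \<in> \<Gamma>" using thy_thm[OF Gt dia_mono[OF ax4]] .
      have c: "Imp (Imp (Dia t1) a) (Imp (Imp (Dia t2) (Imp a b)) (Imp (Imp (Dia (And t1 t2)) (Dia t1))
          (Imp (Imp (Dia (And t1 t2)) (Dia t2)) (Imp (Dia (And t1 t2)) b)))) \<in> \<Gamma>"
        using thy_thm[OF Gt comb2_thm] .
      have "Imp (Dia (And t1 t2)) b \<in> \<Gamma>"
        using thy_mp[OF Gt thy_mp[OF Gt thy_mp[OF Gt thy_mp[OF Gt c t(3)] t(4)] m1] m2] .
      then show ?thesis unfolding E_def using tt by blast
    qed
  qed
  have nd: "\<forall>i\<in>Box ` (- \<Theta>). \<not> deriv L (\<Gamma> \<union> Dia ` \<Theta>) i"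
  proof (intro ballI notI)
    fix i assume i: "i \<in> Box ` (- \<Theta>)" and d: "deriv L (\<Gamma> \<union> Dia ` \<Theta>) i"
    then obtain \<chi> where c: "i = Box \<chi>" "\<chi> \<notin> \<Theta>" by blast
    obtain \<theta> where "\<theta> \<in> \<Theta>" "Imp (Dia \<theta>) (Box \<chi>) \<in> \<Gamma>" using inE[OF d] c unfolding E_def by blast
    then have "Box (Imp \<theta> \<chi>) \<in> \<Gamma>" using thy_thm_mp[OF Gt idb_thm[OF idb]] by blast
    then have "Imp \<theta> \<chi> \<in> \<Theta>" using sub unfolding boxinv_def by blast
    then show False using thy_mp[OF Tt] \<open>\<theta> \<in> \<Theta>\<close> c(2) by blast
  qed
  have orc: "\<forall>i1\<in>Box ` (- \<Theta>). \<forall>i2\<in>Box ` (- \<Theta>). \<exists>i\<in>Box ` (- \<Theta>). deriv L {} (Imp (Or i1 i2) i)"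
  proof (intro ballI)
    fix i1 i2 assume "i1 \<in> Box ` (- \<Theta>)" "i2 \<in> Box ` (- \<Theta>)"
    then obtain c1 c2 where c: "i1 = Box c1" "i2 = Box c2" "c1 \<notin> \<Theta>" "c2 \<notin> \<Theta>" by blast
    have "Or c1 c2 \<notin> \<Theta>" using c thy_or[OF T] by blast
    moreover have "deriv L {} (Imp (Or (Box c1) (Box c2)) (Box (Or c1 c2)))"
      by (rule mp[OF mp[OF ax8 box_mono[OF ax6]] box_mono[OF ax7]])
    ultimately show "\<exists>i\<in>Box ` (- \<Theta>). deriv L {} (Imp (Or i1 i2) i)" using c by blast
  qed
  obtain \<Gamma>u where u: "pthy L \<Gamma>u" "\<Gamma> \<union> Dia ` \<Theta> \<subseteq> \<Gamma>u" "\<Gamma>u \<inter> Box ` (- \<Theta>) = {}"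
    using lindenbaum[OF nd orc] by blast
  have "boxinv \<Gamma>u \<subseteq> \<Theta>" using u(3) unfolding boxinv_def by blast
  then show ?thesis using u by blast
qed

abbreviation "cforces L \<equiv> forces (CX L) ce (cle L) (cR L) (cV L)"

lemma canon_Ncorr: "NDB \<in> L \<Longrightarrow> N_corr (CX L) ce (cle L) (cR L)"
  unfolding N_corr_def
proof (intro ballI impI allI)
  fix x y z assume ndb: "NDB \<in> L" and x: "x \<in> CX L" and h: "\<forall>y\<in>CX L. cle L x y \<longrightarrow> cR L y ce"
    and y: "y \<in> CX L" and z: "z \<in> CX L" and yz: "cle L x y \<and> cR L y z"
  have "cforces L x (Dia Bot)" using h ce_CX by auto
  then have "Dia Bot \<in> fst x" using truth[OF x] by blast
  then have "Box Bot \<in> fst x" using thy_thm_mp[OF pthy_thy[OF CX_pthy[OF x]] ndb_thm[OF ndb]] by blast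
  then have "cforces L x (Box Bot)" using truth[OF x] by blast
  then show "z = ce" using y z yz by auto
qed

lemma canon_Nsuff: "NDB \<in> L \<Longrightarrow> N_suff (CX L) ce (cle L) (cR L)"
  unfolding N_suff_def
proof (intro ballI impI)
  fix x y assume ndb: "NDB \<in> L" and x: "x \<in> CX L" and y: "y \<in> CX L" and h: "cR L x ce \<and> cR L x y"
  have "UNIV \<in> Succ L (fst x) (snd x)" using h unfolding cR_def ce_def by auto
  then have "snd x = {}" unfolding Succ_def by auto
  then have "Dia Bot \<in> fst x" using CX_world[OF x] unfolding world_def by auto
  then have "Box Bot \<in> fst x" using thy_thm_mp[OF pthy_thy[OF CX_pthy[OF x]] ndb_thm[OF ndb]] by blast
  then have "Bot \<in> fst y" using h unfolding cR_def Succ_def boxinv_def by auto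
  then have "fst y = UNIV" using thy_bot[OF pthy_thy[OF CX_pthy[OF y]]] by blast
  then show "y = ce" using CX_eq_ce[OF y] by blast
qed

lemma canon_Csuff: "CD \<in> L \<Longrightarrow> C_suff (CX L) ce (cle L) (cR L)"
  unfolding C_suff_def
proof (intro ballI)
  fix x assume cd: "CD \<in> L" and x: "x \<in> CX L"
  let ?x' = "(fst x, Sd (fst x))"
  have x': "?x' \<in> CX L" using C_world[OF CX_pthy[OF x] cd] unfolding CX_def by auto
  have "cle L x ?x'" using x x' unfolding cle_def by auto
  moreover have "\<exists>w\<in>CX L. cR L y w \<and> cle L z w"
    if y: "y \<in> CX L" and z: "z \<in> CX L" and h: "cle L x y \<and> cR L ?x' z" for y z
  proof -
    have "fst z \<inter> Sd (fst x) = {}" using h unfolding cR_def Succ_def by auto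
    then have "\<forall>\<theta>\<in>fst z. Dia \<theta> \<in> fst y" using h unfolding Sd_def cle_def by auto
    then obtain \<Delta> where d: "\<Delta> \<in> Succ L (fst y) (snd y)" "fst z \<subseteq> \<Delta>"
      using CX_world[OF y] CX_pthy[OF z] unfolding world_def by blast
    have dp: "pthy L \<Delta>" using d(1) unfolding Succ_def by auto
    let ?w = "(\<Delta>, AW \<Delta>)"
    have w: "?w \<in> CX L" using succ_world[OF dp] .
    have "cR L y ?w" "cle L z ?w" using y z w d unfolding cR_def cle_def by auto
    then show ?thesis using w by blast
  qed
  ultimately show "\<exists>x'\<in>CX L. cle L x x' \<and> (\<forall>y\<in>CX L. \<forall>z\<in>CX L. cle L x y \<and> cR L x' z \<longrightarrow> (\<exists>w\<in>CX L. cR L y w \<and> cle L z w))"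
    using x' by blast
qed

lemma canon_Isuff: "IDB \<in> L \<Longrightarrow> I_suff (CX L) ce (cle L) (cR L)"
  unfolding I_suff_def
proof (intro ballI impI)
  fix x y z assume idb: "IDB \<in> L" and x: "x \<in> CX L" and y: "y \<in> CX L" and z: "z \<in> CX L"
    and h: "cR L x y \<and> cle L y z"
  show "\<exists>u\<in>CX L. cle L x u \<and> cR L u z \<and> (\<forall>s\<in>CX L. cle L u s \<longrightarrow> (\<exists>t\<in>CX L. cR L s t \<and> cle L z t))"
  proof (cases "z = ce")
    case True
    have ck: "ck_frame (CX L) ce (cle L) (cR L)" by (rule ck_canon)
    have "cle L x ce" using x ce_CX unfolding cle_def ce_def by auto
    moreover have "cR L ce ce" using ck ce_CX unfolding ck_frame_def by blast
    moreover have "\<forall>s\<in>CX L. cle L ce s \<longrightarrow> (\<exists>t\<in>CX L. cR L s t \<and> cle L z t)"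
      using ck ce_CX True unfolding ck_frame_def by metis
    ultimately show ?thesis using True ce_CX by blast
  next
    case False
    have Tp: "pthy L (fst z)" using CX_pthy[OF z] .
    have nb: "Bot \<notin> fst z" using False CX_eq_ce[OF z] thy_bot[OF pthy_thy[OF Tp]] by blast
    have "boxinv (fst x) \<subseteq> fst z" using h unfolding cR_def cle_def Succ_def by auto
    then obtain \<Gamma>u where u: "pthy L \<Gamma>u" "fst x \<subseteq> \<Gamma>u" "\<forall>\<theta>\<in>fst z. Dia \<theta> \<in> \<Gamma>u" "boxinv \<Gamma>u \<subseteq> fst z"
      using idb_lemma[OF idb CX_pthy[OF x] Tp] by blast
    let ?u = "(\<Gamma>u, AW \<Gamma>u)"
    have uC: "?u \<in> CX L" using succ_world[OF u(1)] .
    have "cle L x ?u" using x uC u(2) unfolding cle_def by auto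
    moreover have "cR L ?u z" using uC z u(4) Tp nb unfolding cR_def Succ_def AW_def by auto
    moreover have "\<exists>t\<in>CX L. cR L s t \<and> cle L z t" if s: "s \<in> CX L" "cle L ?u s" for s
    proof -
      have "\<forall>\<theta>\<in>fst z. Dia \<theta> \<in> fst s" using u(3) s(2) unfolding cle_def by auto
      then obtain \<Delta> where d: "\<Delta> \<in> Succ L (fst s) (snd s)" "fst z \<subseteq> \<Delta>"
        using CX_world[OF s(1)] Tp unfolding world_def by blast
      have dp: "pthy L \<Delta>" using d(1) unfolding Succ_def by auto
      let ?t = "(\<Delta>, AW \<Delta>)"
      have t: "?t \<in> CX L" using succ_world[OF dp] .
      have "cR L s ?t" "cle L z ?t" using s z t d unfolding cR_def cle_def by auto
      then show ?thesis using t by blast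
    qed
    ultimately show ?thesis using uC by blast
  qed
qed

section \<open>Soundness\<close>

context
  fixes X :: "'w set" and e :: 'w and le R :: "'w \<Rightarrow> 'w \<Rightarrow> bool" and V :: "nat \<Rightarrow> 'w set"
  assumes ck: "ck_frame X e le R" and val: "valuation X e le V"
begin

lemma ckD1: "\<forall>x y. le x y \<longrightarrow> x \<in> X \<and> y \<in> X"
  using ck unfolding ck_frame_def by (elim conjE) assumption
lemma ckD2: "\<forall>x y. R x y \<longrightarrow> x \<in> X \<and> y \<in> X"
  using ck unfolding ck_frame_def by (elim conjE) assumption
lemma ckD3: "\<forall>x\<in>X. le x x"
  using ck unfolding ck_frame_def by (elim conjE) assumption
lemma ckD4: "\<forall>x y z. le x y \<longrightarrow> le y z \<longrightarrow> le x z"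
  using ck unfolding ck_frame_def by (elim conjE) assumption
lemma ckD5: "e \<in> X"
  using ck unfolding ck_frame_def by (elim conjE) assumption
lemma ckD6: "\<forall>x\<in>X. le e x \<longrightarrow> x = e"
  using ck unfolding ck_frame_def by (elim conjE) assumption
lemma ckD7: "\<forall>x\<in>X. R e x \<longleftrightarrow> x = e"
  using ck unfolding ck_frame_def by (elim conjE) assumption

lemma leX: "le x y \<Longrightarrow> x \<in> X \<and> y \<in> X" using ckD1 by simp
lemma RX: "R x y \<Longrightarrow> x \<in> X \<and> y \<in> X" using ckD2 by simp
lemma lerefl: "x \<in> X \<Longrightarrow> le x x" using ckD3 by simp
lemma letrans: "le x y \<Longrightarrow> le y z \<Longrightarrow> le x z" using ckD4 by metis
lemma eX: "e \<in> X" using ckD5 by simp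
lemma emax: "le e x \<Longrightarrow> x = e" using ckD6 leX by simp
lemma Re: "x \<in> X \<Longrightarrow> R e x \<longleftrightarrow> x = e" using ckD7 by simp

abbreviation "F \<equiv> forces X e le R V"

lemma persist: "forces X e le R V x \<phi> \<Longrightarrow> le x y \<Longrightarrow> forces X e le R V y \<phi>"
proof (induction \<phi> arbitrary: x y)
  case (Var p) then show ?case using val unfolding valuation_def by auto
next
  case Bot then show ?case using emax by auto
next
  case (And a b) then show ?case by auto
next
  case (Or a b) then show ?case by auto
next
  case (Imp a b)
  show ?case unfolding forces.simps
  proof (intro ballI impI)
    fix z assume "z \<in> X" "le y z" "F z a"
    moreover have "le x z" using Imp.prems(2) \<open>le y z\<close> by (rule letrans)
    ultimately show "F z b" using Imp.prems(1) by simp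
  qed
next
  case (Box a)
  show ?case unfolding forces.simps
  proof (intro ballI impI)
    fix z w assume "z \<in> X" "w \<in> X" "le y z" "R z w"
    moreover have "le x z" using Box.prems(2) \<open>le y z\<close> by (rule letrans)
    ultimately show "F w a" using Box.prems(1) by simp
  qed
next
  case (Dia a)
  show ?case unfolding forces.simps
  proof (intro ballI impI)
    fix z assume "z \<in> X" "le y z"
    moreover have "le x z" using Dia.prems(2) \<open>le y z\<close> by (rule letrans)
    ultimately show "\<exists>w\<in>X. R z w \<and> F w a" using Dia.prems(1) by simp
  qed
qed

lemma e_forces: "forces X e le R V e \<phi>"
proof (induction \<phi>)
  case (Var p) then show ?case using val unfolding valuation_def by auto
next
  case (Imp a b) then show ?case using emax by auto
next
  case (Box a) then show ?case using emax Re by auto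
next
  case (Dia a) then show ?case using emax Re eX by auto
qed auto

lemma ipc_valid: "ipc_axiom \<phi> \<Longrightarrow> x \<in> X \<Longrightarrow> F x \<phi>"
proof (induction rule: ipc_axiom.induct)
  case (A1 p q)
  show ?case unfolding forces.simps
  proof (intro ballI impI)
    fix y z assume "y \<in> X" "le x y" "F y p" "z \<in> X" "le y z"
    then show "F z p" using persist by blast
  qed
next
  case (A2 p q r)
  show ?case unfolding forces.simps
  proof (intro ballI impI)
    fix y1 y2 y3
    assume h: "y1 \<in> X" "le x y1" "\<forall>y\<in>X. le y1 y \<longrightarrow> F y p \<longrightarrow> (\<forall>ya\<in>X. le y ya \<longrightarrow> F ya q \<longrightarrow> F ya r)"
      "y2 \<in> X" "le y1 y2" "\<forall>y\<in>X. le y2 y \<longrightarrow> F y p \<longrightarrow> F y q" "y3 \<in> X" "le y2 y3" "F y3 p"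
    have q: "F y3 q" using h(6,7,8,9) by blast
    have l: "le y1 y3" using h(5,8) by (rule letrans)
    have ll: "le y3 y3" using h(7) by (rule lerefl)
    show "F y3 r" using h(3) h(7) l h(9) ll q by blast
  qed
next
  case (A3 p q) then show ?case by simp
next
  case (A4 p q) then show ?case by simp
next
  case (A5 p q)
  show ?case unfolding forces.simps
  proof (intro ballI impI)
    fix y z assume "y \<in> X" "le x y" "F y p" "z \<in> X" "le y z" "F z q"
    then show "F z p \<and> F z q" using persist by blast
  qed
next
  case (A6 p q) then show ?case by simp
next
  case (A7 p q) then show ?case by simp
next
  case (A8 p r q)
  show ?case unfolding forces.simps
  proof (intro ballI impI)
    fix y1 y2 y3
    assume h: "y1 \<in> X" "le x y1" "\<forall>y\<in>X. le y1 y \<longrightarrow> F y p \<longrightarrow> F y r"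
      "y2 \<in> X" "le y1 y2" "\<forall>y\<in>X. le y2 y \<longrightarrow> F y q \<longrightarrow> F y r" "y3 \<in> X" "le y2 y3" "F y3 p \<or> F y3 q"
    have l: "le y1 y3" using h(5,8) by (rule letrans)
    show "F y3 r" using h(3,6,7,8,9) l by blast
  qed
next
  case (A9 p) then show ?case using e_forces by simp
qed

lemma KBox_valid: "x \<in> X \<Longrightarrow> F x (Imp (Box (Imp p q)) (Imp (Box p) (Box q)))"
  unfolding forces.simps
proof (intro ballI impI)
  fix y1 y2 y3 z
  assume h: "y1 \<in> X" "le x y1" "\<forall>y\<in>X. \<forall>z\<in>X. le y1 y \<longrightarrow> R y z \<longrightarrow> (\<forall>y\<in>X. le z y \<longrightarrow> F y p \<longrightarrow> F y q)"
    "y2 \<in> X" "le y1 y2" "\<forall>y\<in>X. \<forall>z\<in>X. le y2 y \<longrightarrow> R y z \<longrightarrow> F z p" "y3 \<in> X" "z \<in> X" "le y2 y3" "R y3 z"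
  have l: "le y1 y3" using h(5,9) by (rule letrans)
  have ll: "le z z" using h(8) by (rule lerefl)
  have "F z p" using h(6,7,8,9,10) by blast
  then show "F z q" using h(3) h(7,8) l h(10) ll by blast
qed

lemma KDia_valid: "x \<in> X \<Longrightarrow> F x (Imp (Box (Imp p q)) (Imp (Dia p) (Dia q)))"
  unfolding forces.simps
proof (intro ballI impI)
  fix y1 y2 y3
  assume h: "y1 \<in> X" "le x y1" "\<forall>y\<in>X. \<forall>z\<in>X. le y1 y \<longrightarrow> R y z \<longrightarrow> (\<forall>y\<in>X. le z y \<longrightarrow> F y p \<longrightarrow> F y q)"
    "y2 \<in> X" "le y1 y2" "\<forall>y\<in>X. le y2 y \<longrightarrow> (\<exists>z\<in>X. R y z \<and> F z p)" "y3 \<in> X" "le y2 y3"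
  then obtain z where z: "z \<in> X" "R y3 z" "F z p" by blast
  have l: "le y1 y3" using h(5,8) by (rule letrans)
  have ll: "le z z" using z(1) by (rule lerefl)
  have "F z q" using h(3) h(7) z(1) l z(2) ll z(3) by blast
  then show "\<exists>z\<in>X. R y3 z \<and> F z q" using z by blast
qed

end

lemma sound_aux:
  assumes "deriv Lg \<Gamma> \<phi>" "Lg = insert NDB Ax" "in_class nc Ax X e le R" "valuation X e le V"
  shows "\<forall>x\<in>X. (\<forall>\<psi>\<in>\<Gamma>. forces X e le R V x \<psi>) \<longrightarrow> forces X e le R V x \<phi>"
  using assms
proof (induction rule: deriv.induct)
  case (ipc \<phi> Lg \<Gamma>)
  have ck: "ck_frame X e le R" using ipc(3) unfolding in_class_def by simp
  show ?case using ipc_valid[OF ck ipc(4) ipc(1)] by blast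
next
  case (KBox Lg \<Gamma> p q)
  have ck: "ck_frame X e le R" using KBox(2) unfolding in_class_def by simp
  show ?case using KBox_valid[OF ck KBox(3)] by blast
next
  case (KDia Lg \<Gamma> p q)
  have ck: "ck_frame X e le R" using KDia(2) unfolding in_class_def by simp
  show ?case using KDia_valid[OF ck KDia(3)] by blast
next
  case (extra A Lg \<phi> \<Gamma>)
  have ck: "ck_frame X e le R" using extra(4) unfolding in_class_def by simp
  note val = extra(5)
  show ?case
  proof (intro ballI impI)
    fix x assume x: "x \<in> X"
    consider "A = NDB" | "A = CD" "CD \<in> Ax" | "A = IDB" "IDB \<in> Ax" using extra(1,3) by (cases A) auto
    then show "forces X e le R V x \<phi>"
    proof cases
      case 1
      then have \<phi>: "\<phi> = Imp (Dia Bot) (Box Bot)" using extra(2) by simp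
      show ?thesis unfolding \<phi> forces.simps
      proof (intro ballI impI)
        fix y z w assume h: "y \<in> X" "le x y" "\<forall>ya\<in>X. le y ya \<longrightarrow> (\<exists>z\<in>X. R ya z \<and> z = e)" "z \<in> X" "w \<in> X" "le y z" "R z w"
        have h3: "\<forall>ya\<in>X. le y ya \<longrightarrow> R ya e" using h(3) by blast
        show "w = e"
        proof (cases nc)
          case Ncorr
          then have "N_corr X e le R" using extra(4) unfolding in_class_def by auto
          then show ?thesis using h h3 unfolding N_corr_def by blast
        next
          case Nsuff
          then have "N_suff X e le R" using extra(4) unfolding in_class_def by auto
          moreover have "R z e" using h3 h(4,6) by blast
          ultimately show ?thesis using h eX[OF ck val] unfolding N_suff_def by blast
        qed
      qed
    next
      case 2
      then obtain p q where \<phi>: "\<phi> = Imp (Dia (Or p q)) (Or (Dia p) (Dia q))" using extra(2) by auto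
      have cs: "C_suff X e le R" using 2 extra(4) unfolding in_class_def by auto
      show ?thesis unfolding \<phi> forces.simps
      proof (intro ballI impI)
        fix y assume y: "y \<in> X" "le x y" and d: "\<forall>ya\<in>X. le y ya \<longrightarrow> (\<exists>z\<in>X. R ya z \<and> (forces X e le R V z p \<or> forces X e le R V z q))"
        obtain y' where y': "y' \<in> X" "le y y'" "\<forall>u\<in>X. \<forall>z\<in>X. le y u \<and> R y' z \<longrightarrow> (\<exists>w\<in>X. R u w \<and> le z w)"
          using cs y(1) unfolding C_suff_def by blast
        obtain z where z: "z \<in> X" "R y' z" "forces X e le R V z p \<or> forces X e le R V z q" using d y'(1,2) by blast
        have gen: "\<forall>u\<in>X. le y u \<longrightarrow> (\<exists>w\<in>X. R u w \<and> forces X e le R V w r)" if fr: "forces X e le R V z r" for r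
        proof (intro ballI impI)
          fix u assume u: "u \<in> X" "le y u"
          then obtain w where w: "w \<in> X" "R u w" "le z w" using y'(3) z(1,2) by blast
          have "forces X e le R V w r" using persist[OF ck val fr w(3)] .
          then show "\<exists>w\<in>X. R u w \<and> forces X e le R V w r" using w by blast
        qed
        show "(\<forall>ya\<in>X. le y ya \<longrightarrow> (\<exists>z\<in>X. R ya z \<and> forces X e le R V z p)) \<or>
              (\<forall>ya\<in>X. le y ya \<longrightarrow> (\<exists>z\<in>X. R ya z \<and> forces X e le R V z q))"
          using z(3) gen[of p] gen[of q] by blast
      qed
    next
      case 3
      then obtain p q where \<phi>: "\<phi> = Imp (Imp (Dia p) (Box q)) (Box (Imp p q))" using extra(2) by auto
      have isf: "I_suff X e le R" using 3 extra(4) unfolding in_class_def by auto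
      show ?thesis unfolding \<phi> forces.simps
      proof (intro ballI impI)
        fix y y1 z z1
        assume h: "y \<in> X" "le x y"
          "\<forall>ya\<in>X. le y ya \<longrightarrow> (\<forall>yb\<in>X. le ya yb \<longrightarrow> (\<exists>z\<in>X. R yb z \<and> forces X e le R V z p)) \<longrightarrow>
              (\<forall>yb\<in>X. \<forall>z\<in>X. le ya yb \<longrightarrow> R yb z \<longrightarrow> forces X e le R V z q)"
          "y1 \<in> X" "z \<in> X" "le y y1" "R y1 z" "z1 \<in> X" "le z z1" "forces X e le R V z1 p"
        obtain u where u: "u \<in> X" "le y1 u" "R u z1" "\<forall>s\<in>X. le u s \<longrightarrow> (\<exists>t\<in>X. R s t \<and> le z1 t)"
          using isf h(4,5,7,8,9) unfolding I_suff_def by blast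
        have dp: "\<forall>s\<in>X. le u s \<longrightarrow> (\<exists>t\<in>X. R s t \<and> forces X e le R V t p)"
        proof (intro ballI impI)
          fix s assume s: "s \<in> X" "le u s"
          then obtain t where t: "t \<in> X" "R s t" "le z1 t" using u(4) by blast
          have "forces X e le R V t p" using persist[OF ck val h(10) t(3)] .
          then show "\<exists>t\<in>X. R s t \<and> forces X e le R V t p" using t by blast
        qed
        have lu: "le y u" using letrans[OF ck val h(6) u(2)] .
        have uu: "le u u" using lerefl[OF ck val u(1)] .
        have "\<forall>yb\<in>X. \<forall>z\<in>X. le u yb \<longrightarrow> R yb z \<longrightarrow> forces X e le R V z q"
          using h(3) u(1) lu dp by blast
        then show "forces X e le R V z1 q" using u(1,3) h(8) uu by blast
      qed
    qed
  qed
next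
  case (El \<phi> \<Gamma> Lg) then show ?case by blast
next
  case (MP Lg \<Gamma> \<phi> \<psi>)
  have ck: "ck_frame X e le R" using MP(6) unfolding in_class_def by simp
  show ?case
  proof (intro ballI impI)
    fix x assume x: "x \<in> X" "\<forall>\<psi>\<in>\<Gamma>. forces X e le R V x \<psi>"
    have a: "forces X e le R V x \<phi>" using MP.IH(1) MP(5,6,7) x by blast
    have b: "forces X e le R V x (Imp \<phi> \<psi>)" using MP.IH(2) MP(5,6,7) x by blast
    show "forces X e le R V x \<psi>" using b a x(1) lerefl[OF ck MP(7) x(1)] by simp
  qed
next
  case (Nec Lg \<phi> \<Gamma>)
  have ck: "ck_frame X e le R" using Nec(4) unfolding in_class_def by simp
  have all: "\<forall>x\<in>X. forces X e le R V x \<phi>" using Nec.IH Nec(3,4,5) by blast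
  show ?case
  proof (intro ballI impI)
    fix x assume "x \<in> X"
    show "forces X e le R V x (Box \<phi>)" using all by simp
  qed
qed

definition tle :: "('a \<Rightarrow> 'b) \<Rightarrow> 'a set \<Rightarrow> ('a \<Rightarrow> 'a \<Rightarrow> bool) \<Rightarrow> 'b \<Rightarrow> 'b \<Rightarrow> bool" where
  "tle f X le a b \<longleftrightarrow> a \<in> f ` X \<and> b \<in> f ` X \<and> le (inv_into X f a) (inv_into X f b)"

lemma tle_f: "inj_on f X \<Longrightarrow> a \<in> X \<Longrightarrow> b \<in> X \<Longrightarrow> tle f X le (f a) (f b) \<longleftrightarrow> le a b"
  unfolding tle_def by auto

lemma ball_img: "(\<forall>a\<in>f ` X. P a) \<longleftrightarrow> (\<forall>y\<in>X. P (f y))" by auto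
lemma bex_img: "(\<exists>a\<in>f ` X. P a) \<longleftrightarrow> (\<exists>y\<in>X. P (f y))" by auto

lemma transfer_forces:
  assumes inj: "inj_on f X" and ck: "ck_frame X e le R" and val: "valuation X e le V" and y: "y \<in> X"
  shows "forces (f ` X) (f e) (tle f X le) (tle f X R) (\<lambda>p. f ` V p) (f y) \<psi> \<longleftrightarrow> forces X e le R V y \<psi>"
  using y
proof (induction \<psi> arbitrary: y)
  case (Var p)
  have "V p \<subseteq> X" using val unfolding valuation_def by blast
  then show ?case using Var inj unfolding inj_on_def by auto
next
  case Bot then show ?case using inj eX[OF ck val] unfolding inj_on_def by auto
next
  case (Imp a b) then show ?case by (simp add: ball_img tle_f[OF inj])
next
  case (Box a) then show ?case by (simp add: ball_img tle_f[OF inj])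
next
  case (Dia a) then show ?case by (simp add: ball_img bex_img tle_f[OF inj])
next
  case (And a b) then show ?case by simp
next
  case (Or a b) then show ?case by simp
qed

lemma transfer_ck:
  assumes inj: "inj_on f X" and ck: "ck_frame X e le R"
  shows "ck_frame (f ` X) (f e) (tle f X le) (tle f X R)"
proof -
  have c3: "\<forall>x\<in>X. le x x" using ck unfolding ck_frame_def by (elim conjE) assumption
  have c4: "\<forall>x y z. le x y \<longrightarrow> le y z \<longrightarrow> le x z" using ck unfolding ck_frame_def by (elim conjE) assumption
  have c5: "e \<in> X" using ck unfolding ck_frame_def by (elim conjE) assumption
  have c6: "\<forall>x\<in>X. le e x \<longrightarrow> x = e" using ck unfolding ck_frame_def by (elim conjE) assumption
  have c7: "\<forall>x\<in>X. R e x \<longleftrightarrow> x = e" using ck unfolding ck_frame_def by (elim conjE) assumption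
  note c = TrueI TrueI c3 c4 c5 c6 c7
  show ?thesis unfolding ck_frame_def
  proof (intro conjI)
    show "\<forall>x y. tle f X le x y \<longrightarrow> x \<in> f ` X \<and> y \<in> f ` X" unfolding tle_def by blast
    show "\<forall>x y. tle f X R x y \<longrightarrow> x \<in> f ` X \<and> y \<in> f ` X" unfolding tle_def by blast
    show "\<forall>x\<in>f ` X. tle f X le x x" unfolding ball_img using tle_f[OF inj] c(3) by simp
    show "\<forall>x y z. tle f X le x y \<longrightarrow> tle f X le y z \<longrightarrow> tle f X le x z"
    proof (intro allI impI)
      fix x y z assume "tle f X le x y" "tle f X le y z"
      then show "tle f X le x z" unfolding tle_def using c(4) by blast
    qed
    show "f e \<in> f ` X" using c(5) by blast
    show "\<forall>x\<in>f ` X. tle f X le (f e) x \<longrightarrow> x = f e" unfolding ball_img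
    proof (intro ballI impI)
      fix y assume "y \<in> X" "tle f X le (f e) (f y)"
      then have "le e y" using tle_f[OF inj c5] by blast
      then show "f y = f e" using c6 \<open>y \<in> X\<close> by blast
    qed
    show "\<forall>x\<in>f ` X. tle f X R (f e) x = (x = f e)" unfolding ball_img using tle_f[OF inj] c(5,7) inj
      unfolding inj_on_def by auto
  qed
qed

lemma transfer_class:
  assumes inj: "inj_on f X" and cls: "in_class nc Ax X e le R"
  shows "in_class nc Ax (f ` X) (f e) (tle f X le) (tle f X R)"
proof -
  have ck: "ck_frame X e le R" using cls unfolding in_class_def by simp
  have eX: "e \<in> X" using ck unfolding ck_frame_def by (elim conjE)
  have finj: "\<And>a. a \<in> X \<Longrightarrow> f a = f e \<longleftrightarrow> a = e" using inj eX unfolding inj_on_def by blast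
  note tf = tle_f[OF inj]
  have "N_corr (f ` X) (f e) (tle f X le) (tle f X R)" if "N_corr X e le R"
    using that eX unfolding N_corr_def ball_img by (simp add: tf finj)
  moreover have "N_suff (f ` X) (f e) (tle f X le) (tle f X R)" if "N_suff X e le R"
    using that eX unfolding N_suff_def ball_img by (simp add: tf finj)
  moreover have "C_suff (f ` X) (f e) (tle f X le) (tle f X R)" if "C_suff X e le R"
    using that unfolding C_suff_def ball_img bex_img by (simp add: tf)
  moreover have "I_suff (f ` X) (f e) (tle f X le) (tle f X R)" if "I_suff X e le R"
    using that unfolding I_suff_def ball_img bex_img by (simp add: tf)
  ultimately show ?thesis using cls transfer_ck[OF inj ck] unfolding in_class_def by (auto split: ncond.splits)
qed

lemma transfer_val:
  assumes inj: "inj_on f X" and val: "valuation X e le V"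
  shows "valuation (f ` X) (f e) (tle f X le) (\<lambda>p. f ` V p)"
  unfolding valuation_def
proof (rule allI, intro conjI)
  fix p
  have vp: "V p \<subseteq> X" "e \<in> V p" "\<forall>x y. x \<in> V p \<longrightarrow> le x y \<longrightarrow> y \<in> V p" using val unfolding valuation_def by auto
  show "f ` V p \<subseteq> f ` X" using vp by auto
  show "f e \<in> f ` V p" using vp by auto
  show "\<forall>a b. a \<in> f ` V p \<longrightarrow> tle f X le a b \<longrightarrow> b \<in> f ` V p"
  proof (intro allI impI)
    fix a b assume ab: "a \<in> f ` V p" "tle f X le a b"
    then obtain y z where yz: "y \<in> V p" "a = f y" "z \<in> X" "b = f z" unfolding tle_def by auto
    then have "le y z" using ab(2) tle_f[OF inj] vp(1) by auto
    then show "b \<in> f ` V p" using vp yz by auto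
  qed
qed

lemma transfer:
  fixes f :: "'a \<Rightarrow> 'b" and X :: "'a set"
  assumes inj: "inj_on f X" and cls: "in_class nc Ax X e le R" and val: "valuation X e le V"
    and x: "x \<in> X" and G: "\<forall>\<psi>\<in>\<Gamma>. forces X e le R V x \<psi>" and n: "\<not> forces X e le R V x \<phi>"
  shows "\<not> conseq TYPE('b) nc Ax \<Gamma> \<phi>"
proof -
  have ck: "ck_frame X e le R" using cls unfolding in_class_def by simp
  note tr = transfer_forces[OF inj ck val x]
  show ?thesis unfolding conseq_def
    using transfer_class[OF inj cls] transfer_val[OF inj val] x G n tr by blast
qed

definition enc :: "fm set \<times> fm set \<Rightarrow> fm set" where
  "enc w = (\<lambda>\<phi>. And \<phi> Bot) ` fst w \<union> (\<lambda>\<phi>. Or \<phi> Bot) ` snd w"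

lemma enc_inj: "inj_on enc S"
proof (rule inj_onI)
  fix p q assume "enc p = enc q"
  moreover have "fst w = {\<phi>. And \<phi> Bot \<in> enc w}" "snd w = {\<phi>. Or \<phi> Bot \<in> enc w}" for w
    unfolding enc_def by auto
  ultimately show "p = q" by (metis prod.expand)
qed

lemma canon_val: "valuation (CX L) ce (cle L) (cV L)"
  unfolding valuation_def
proof (intro allI conjI)
  fix p
  show "cV L p \<subseteq> CX L" unfolding cV_def by blast
  show "ce \<in> cV L p" unfolding cV_def using ce_CX by (simp add: ce_def)
  show "x \<in> cV L p \<longrightarrow> cle L x y \<longrightarrow> y \<in> cV L p" for x y unfolding cV_def cle_def by blast
qed

lemma complete:
  assumes c: "conseq TYPE(fm set) nc Ax \<Gamma> \<phi>"
  shows "deriv (insert NDB Ax) \<Gamma> \<phi>"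
proof (rule ccontr)
  let ?L = "insert NDB Ax"
  assume "\<not> deriv ?L \<Gamma> \<phi>"
  then obtain \<Gamma>0 where g: "pthy ?L \<Gamma>0" "\<Gamma> \<subseteq> \<Gamma>0" "\<phi> \<notin> \<Gamma>0" using lindenbaum1 by blast
  let ?w = "(\<Gamma>0, AW \<Gamma>0)"
  have w: "?w \<in> CX ?L" using succ_world[OF g(1)] .
  have cls: "in_class nc Ax (CX ?L) ce (cle ?L) (cR ?L)"
    unfolding in_class_def
  proof (intro conjI impI)
    show "ck_frame (CX ?L) ce (cle ?L) (cR ?L)" by (rule ck_canon)
    show "case nc of Ncorr \<Rightarrow> N_corr (CX ?L) ce (cle ?L) (cR ?L) | Nsuff \<Rightarrow> N_suff (CX ?L) ce (cle ?L) (cR ?L)"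
      using canon_Ncorr[of ?L] canon_Nsuff[of ?L] by (cases nc) simp_all
    show "C_suff (CX ?L) ce (cle ?L) (cR ?L)" if "CD \<in> Ax" using canon_Csuff[of ?L] that by simp
    show "I_suff (CX ?L) ce (cle ?L) (cR ?L)" if "IDB \<in> Ax" using canon_Isuff[of ?L] that by simp
  qed
  have G: "\<forall>\<psi>\<in>\<Gamma>. forces (CX ?L) ce (cle ?L) (cR ?L) (cV ?L) ?w \<psi>"
  proof
    fix \<psi> assume "\<psi> \<in> \<Gamma>"
    then have "\<psi> \<in> fst ?w" using g(2) by auto
    then show "forces (CX ?L) ce (cle ?L) (cR ?L) (cV ?L) ?w \<psi>" by (rule truth[OF w, THEN iffD2])
  qed
  have n: "\<not> forces (CX ?L) ce (cle ?L) (cR ?L) (cV ?L) ?w \<phi>"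
  proof
    assume "forces (CX ?L) ce (cle ?L) (cR ?L) (cV ?L) ?w \<phi>"
    then have "\<phi> \<in> fst ?w" by (rule truth[OF w, THEN iffD1])
    then show False using g(3) by simp
  qed
  have "\<not> conseq TYPE(fm set) nc Ax \<Gamma> \<phi>"
    using transfer[OF enc_inj cls canon_val w G n] .
  then show False using c by blast
qed

lemma sound:
  assumes "deriv (insert NDB Ax) \<Gamma> \<phi>"
  shows "conseq TYPE('w) nc Ax \<Gamma> \<phi>"
  unfolding conseq_def
proof (intro allI impI)
  fix X :: "'w set" and e le R V
  assume h: "in_class nc Ax X e le R" "valuation X e le V"
  show "\<forall>x\<in>X. (\<forall>\<psi>\<in>\<Gamma>. forces X e le R V x \<psi>) \<longrightarrow> forces X e le R V x \<phi>"
    by (rule sound_aux[OF assms refl h])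
qed

theorem mainTheorem15:
  fixes Ax :: "ax set"
  assumes "Ax \<subseteq> {CD, IDB}"
  shows "sound_strongly_complete TYPE('w) (insert NDB Ax) Ncorr Ax
         \<and> (IDB \<in> Ax \<longrightarrow> sound_strongly_complete TYPE('w) (insert NDB Ax) Nsuff Ax)"
  unfolding sound_strongly_complete_def
proof (intro conjI impI allI)
  show "deriv (insert NDB Ax) \<Gamma> \<phi> \<Longrightarrow> conseq TYPE('w) Ncorr Ax \<Gamma> \<phi>" for \<Gamma> \<phi> by (rule sound)
  show "conseq TYPE(fm set) Ncorr Ax \<Gamma> \<phi> \<Longrightarrow> deriv (insert NDB Ax) \<Gamma> \<phi>" for \<Gamma> \<phi> by (rule complete)
  show "deriv (insert NDB Ax) \<Gamma> \<phi> \<Longrightarrow> conseq TYPE('w) Nsuff Ax \<Gamma> \<phi>" for \<Gamma> \<phi> by (rule sound)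
  show "conseq TYPE(fm set) Nsuff Ax \<Gamma> \<phi> \<Longrightarrow> deriv (insert NDB Ax) \<Gamma> \<phi>" for \<Gamma> \<phi> by (rule complete)
qed

end
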